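(* Let $K$ be an algebraically closed field of characteristic zero, $\mathcal{K}=K(t)$, $\phi_2(z) := \frac{(t+1)(z-1)}{z+t}$, and let $\alpha \in \mathcal{K}$ satisfy condition $( * )$. Then (A) $\phi_2(\alpha)$ also satisfies $( * )$, and (B) $h(\phi_2(\alpha)) = h(\alpha)+1$.
   Context: Condition $( * )$ on $\beta\in\mathcal{K}$: (i) $\beta$ vanishes at $\mathfrak{p}_{-1}$; (ii) $\beta^2-\beta+t+1$ vanishes at $\mathfrak{p}_{-1}$, and possibly at $\mathfrak{p}_{-3/4}$, but at no other place of $\mathcal{K}$; (iii) if $\beta^2-\beta+t+1$ vanishes at $\mathfrak{p}_{-3/4}$, then $\beta - 1/2$ also vanishes at $\mathfrak{p}_{-3/4}$. Here places of $\mathcal{K}$ are those trivial on $K$, $\mathfrak{p}_c$ is the place at $t=c$, and vanishing means positive valuation. The height $h$ of an element of $K(t)$ is its degree as a rational function in $t$. *)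

theory Defs
  imports "HOL-Computational_Algebra.Computational_Algebra"
          "HOL-Computational_Algebra.Normalized_Fraction"
begin

type_synonym 'a ratfun = "'a poly fract"

definition tvar :: "'a::field ratfun" where
  "tvar = to_fract [:0, 1:]"

definition const :: "'a::field \<Rightarrow> 'a ratfun" where
  "const c = to_fract [:c:]"

text \<open>Positive valuation at the finite place t = c (reduced numerator vanishes at c).\<close>
definition vanishes_at :: "'a::field_gcd \<Rightarrow> 'a ratfun \<Rightarrow> bool" where
  "vanishes_at c x = (poly (fst (quot_of_fract x)) c = 0)"

text \<open>Positive valuation at the infinite place.\<close>
definition vanishes_at_inf :: "'a::field_gcd ratfun \<Rightarrow> bool" where
  "vanishes_at_inf x = (x = 0 \<or> degree (fst (quot_of_fract x)) < degree (snd (quot_of_fract x)))"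

definition height :: "'a::field_gcd ratfun \<Rightarrow> nat" where
  "height x = max (degree (fst (quot_of_fract x))) (degree (snd (quot_of_fract x)))"

definition cond_star :: "'a::{field_char_0,field_gcd} ratfun \<Rightarrow> bool" where
  "cond_star \<beta> =
     (let \<gamma> = \<beta>^2 - \<beta> + tvar + 1 in
        vanishes_at (-1) \<beta>
      \<and> vanishes_at (-1) \<gamma>
      \<and> (\<forall>c. vanishes_at c \<gamma> \<longrightarrow> c = -1 \<or> c = -3/4)
      \<and> \<not> vanishes_at_inf \<gamma>
      \<and> (vanishes_at (-3/4) \<gamma> \<longrightarrow> vanishes_at (-3/4) (\<beta> - const (1/2))))"

definition phi2 :: "'a::field ratfun \<Rightarrow> 'a ratfun" where
  "phi2 z = (tvar + 1) * (z - 1) / (z + tvar)"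

end

theory Submission
  imports Defs
begin

lemma coprime_add_mul_left:
  fixes a b c :: "'a::field_gcd poly"
  shows "coprime (a + c * b) b = coprime a b"
proof
  assume h: "coprime (a + c * b) b"
  show "coprime a b"
  proof (rule coprimeI)
    fix d assume "d dvd a" "d dvd b"
    hence "d dvd a + c * b" by simp
    thus "is_unit d" using h \<open>d dvd b\<close> coprime_common_divisor by blast
  qed
next
  assume h: "coprime a b"
  show "coprime (a + c * b) b"
  proof (rule coprimeI)
    fix d assume d1: "d dvd a + c * b" and d2: "d dvd b"
    hence "d dvd c * b" by simp
    with d1 have "d dvd (a + c * b) - c * b" by (rule dvd_diff)
    hence "d dvd a" by simp
    thus "is_unit d" using h d2 coprime_common_divisor by blast
  qed
qed

lemma repr:
  fixes a b :: "'a::field_gcd poly"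
  assumes "b \<noteq> 0" "coprime a b"
  obtains d where "d \<noteq> 0" "degree d = 0"
     "a = fst (quot_of_fract (to_fract a / to_fract b)) * d"
     "b = snd (quot_of_fract (to_fract a / to_fract b)) * d"
proof -
  have "to_fract a / to_fract b = quot_to_fract (a,b)"
    by (simp add: quot_to_fract_def Fract_conv_to_fract)
  hence e: "quot_of_fract (to_fract a / to_fract b) = normalize_quot (a,b)"
    by (simp add: quot_of_fract_quot_to_fract)
  from normalize_quotE[OF assms(1), of a] obtain d where
    d: "a = fst (normalize_quot (a, b)) * d" "b = snd (normalize_quot (a, b)) * d"
       "d dvd a" "d dvd b" "d \<noteq> 0" .
  have "is_unit d" using coprime_common_divisor assms(2) d(3,4) by blast
  hence "degree d = 0" using is_unit_iff_degree d(5) by blast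
  thus thesis using that d e by simp
qed

lemma repr_van:
  fixes a b :: "'a::field_gcd poly"
  assumes "b \<noteq> 0" "coprime a b"
  shows "vanishes_at c (to_fract a / to_fract b) \<longleftrightarrow> poly a c = 0"
proof -
  obtain d where d: "d \<noteq> 0" "degree d = 0"
     "a = fst (quot_of_fract (to_fract a / to_fract b)) * d"
    using repr[OF assms] by blast
  from d(2) obtain e where e: "d = [:e:]" by (metis degree_eq_zeroE)
  with d(1) have "e \<noteq> 0" by simp
  have "poly a c = poly (fst (quot_of_fract (to_fract a / to_fract b))) c * e"
    by (subst d(3)) (simp add: e)
  thus ?thesis using \<open>e \<noteq> 0\<close> by (simp add: vanishes_at_def)
qed

lemma repr_deg:
  fixes a b :: "'a::field_gcd poly"
  assumes "b \<noteq> 0" "coprime a b"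
  shows "degree (fst (quot_of_fract (to_fract a / to_fract b))) = degree a"
    "degree (snd (quot_of_fract (to_fract a / to_fract b))) = degree b"
proof -
  obtain d where d: "d \<noteq> 0" "degree d = 0"
     "a = fst (quot_of_fract (to_fract a / to_fract b)) * d"
     "b = snd (quot_of_fract (to_fract a / to_fract b)) * d"
    using repr[OF assms] by blast
  show "degree (fst (quot_of_fract (to_fract a / to_fract b))) = degree a"
  proof (cases "fst (quot_of_fract (to_fract a / to_fract b)) = 0")
    case True then show ?thesis using d(3) assms(1) by auto
  next
    case False then show ?thesis using d by (metis add_0_right degree_mult_eq)
  qed
  show "degree (snd (quot_of_fract (to_fract a / to_fract b))) = degree b"
    using d snd_quot_of_fract_nonzero by (metis add_0_right degree_mult_eq)
qed


definition L1 :: "'a::field_gcd poly" where "L1 = [:1,1:]"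

definition Nf :: "'a::field_gcd poly \<Rightarrow> 'a poly \<Rightarrow> 'a poly" where
  "Nf a b = a^2 - a*b + L1*b^2"

lemma tvar1: "tvar + 1 = (to_fract L1 :: 'a::field_gcd ratfun)"
proof -
  have "[:1,1:] = [:0,1:] + (1::'a poly)" by (simp add: one_pCons)
  hence "to_fract [:1,1:] = to_fract [:0,1:] + (1::'a ratfun)" by simp
  thus ?thesis by (simp add: tvar_def L1_def)
qed

lemma gamma_eq:
  fixes a b :: "'a::field_gcd poly"
  assumes "b \<noteq> 0"
  shows "(to_fract a / to_fract b)^2 - to_fract a / to_fract b + tvar + 1
          = to_fract (Nf a b) / to_fract (b^2)"
proof -
  have "to_fract b \<noteq> 0" using assms by simp
  have "(to_fract a / to_fract b)^2 - to_fract a / to_fract b + tvar + 1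
     = (to_fract a / to_fract b)^2 - to_fract a / to_fract b + (tvar + 1)" by simp
  also have "\<dots> = to_fract (Nf a b) / to_fract (b^2)"
    unfolding tvar1 using \<open>to_fract b \<noteq> 0\<close>
    by (simp add: Nf_def power2_eq_square field_simps)
  finally show ?thesis .
qed

lemma Nf_coprime:
  fixes a b :: "'a::field_gcd poly"
  assumes "coprime a b"
  shows "coprime (Nf a b) (b^2)"
proof -
  have "Nf a b = a^2 + (L1*b - a)*b" by (simp add: Nf_def algebra_simps power2_eq_square)
  hence "coprime (Nf a b) b" using assms coprime_add_mul_left[of "a^2" "L1*b - a" b] by simp
  thus ?thesis by simp
qed

lemma Nf_deg:
  fixes a b :: "'a::field_gcd poly"
  assumes "b \<noteq> 0"
  shows "degree (Nf a b) > 2 * degree b"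
proof -
  have e: "Nf a b = a*(a-b) + L1*b^2" by (simp add: Nf_def algebra_simps power2_eq_square)
  have "L1 \<noteq> (0::'a poly)" "degree (L1::'a poly) = 1" by (simp_all add: L1_def)
  hence dl: "degree (L1*b^2) = 2 * degree b + 1"
    using assms by (simp add: degree_mult_eq degree_power_eq)
  show ?thesis
  proof (cases "degree a \<le> degree b")
    case True
    have "degree (a*(a-b)) \<le> degree a + degree (a - b)" by (rule degree_mult_le)
    also have "\<dots> \<le> degree a + max (degree a) (degree b)" using degree_diff_le_max by simp
    also have "\<dots> \<le> 2 * degree b" using True by simp
    finally have "degree (a*(a-b)) < degree (L1*b^2)" using dl by simp
    hence "degree (Nf a b) = degree (L1*b^2)" unfolding e by (rule degree_add_eq_right)
    thus ?thesis using dl by simp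
  next
    case False
    hence a0: "a \<noteq> 0" by auto
    have "degree (a - b) = degree a" using False
      by (metis degree_add_eq_left degree_minus diff_conv_add_uminus not_le)
    moreover have "a - b \<noteq> 0" using False by auto
    ultimately have da: "degree (a*(a-b)) = 2 * degree a" using a0 by (simp add: degree_mult_eq)
    hence "degree (L1*b^2) < degree (a*(a-b))" using dl False by simp
    hence "degree (Nf a b) = degree (a*(a-b))" unfolding e by (rule degree_add_eq_left)
    thus ?thesis using da False by simp
  qed
qed

lemma Nf_nonzero:
  fixes a b :: "'a::field_gcd poly"
  assumes "b \<noteq> 0"
  shows "Nf a b \<noteq> 0"
proof
  assume "Nf a b = 0"
  thus False using Nf_deg[OF assms, of a] by simp
qed

lemma Nf_not_inf:
  fixes a b :: "'a::field_gcd poly"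
  assumes "b \<noteq> 0" "coprime a b"
  shows "\<not> vanishes_at_inf (to_fract (Nf a b) / to_fract (b^2))"
proof -
  have b2: "b^2 \<noteq> 0" using assms by simp
  have c: "coprime (Nf a b) (b^2)" using Nf_coprime assms by blast
  have "to_fract (Nf a b) / to_fract (b^2) \<noteq> 0" using Nf_nonzero[OF assms(1)] b2 by simp
  moreover have "degree (b^2) < degree (Nf a b)" using Nf_deg[OF assms(1)] assms(1)
    by (simp add: degree_power_eq)
  ultimately show ?thesis unfolding vanishes_at_inf_def repr_deg[OF b2 c] by simp
qed


lemma coprime_add_mul_right:
  fixes a b c :: "'a::field_gcd poly"
  shows "coprime b (a + c * b) = coprime b a"
  using coprime_add_mul_left[of a c b] by (simp add: coprime_commute)

lemma shift_eq:
  fixes a b :: "'a::field_gcd poly"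
  assumes "b \<noteq> 0"
  shows "to_fract a / to_fract b - const c = to_fract (a - [:c:]*b) / to_fract b"
proof -
  have b: "to_fract b \<noteq> 0" using assms by simp
  have "to_fract (a - [:c:]*b) / to_fract b = (to_fract a - to_fract [:c:] * to_fract b) / to_fract b"
    by (simp only: to_fract_diff to_fract_mult)
  also have "\<dots> = to_fract a / to_fract b - to_fract [:c:]" using b by (simp add: diff_divide_distrib)
  finally show ?thesis by (simp add: const_def)
qed

lemma shift_coprime:
  fixes a b :: "'a::field_gcd poly"
  assumes "coprime a b"
  shows "coprime (a - [:c:]*b) b"
  using coprime_add_mul_left[of a "-[:c:]" b] assms by simp

lemma cond_star_char:
  fixes a b :: "'a::{field_char_0,field_gcd} poly"
  assumes b: "b \<noteq> 0" and cp: "coprime a b"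
  shows "cond_star (to_fract a / to_fract b) \<longleftrightarrow>
    poly a (-1) = 0 \<and> poly (Nf a b) (-1) = 0 \<and> (\<forall>c. poly (Nf a b) c = 0 \<longrightarrow> c = -1 \<or> c = -3/4)
    \<and> (poly (Nf a b) (-3/4) = 0 \<longrightarrow> poly (a - [:1/2:]*b) (-3/4) = 0)"
proof -
  have b2: "b^2 \<noteq> 0" using b by simp
  have c2: "coprime (Nf a b) (b^2)" using Nf_coprime cp by blast
  show ?thesis
    unfolding cond_star_def Let_def gamma_eq[OF b] shift_eq[OF b]
      repr_van[OF b cp] repr_van[OF b2 c2] repr_van[OF b shift_coprime[OF cp]]
    using Nf_not_inf[OF b cp] by blast
qed

definition T0 :: "'a::field_gcd poly" where "T0 = [:0,1:]"

lemma L1_T0: "L1 = T0 + 1"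
  by (simp add: L1_def T0_def one_pCons)

lemma lin_coprime:
  fixes x :: "'a::field_gcd poly"
  assumes "poly x (-1) \<noteq> 0"
  shows "coprime L1 x"
proof -
  have "prime_elem (L1::'a poly)" unfolding L1_def by (rule prime_elem_linear_field_poly) simp
  moreover have "\<not> L1 dvd x" using assms poly_eq_0_iff_dvd[of x "-1"] by (simp add: L1_def)
  ultimately show ?thesis by (rule prime_elem_imp_coprime)
qed

lemma height_step:
  fixes p q :: "'a::field_gcd poly"
  assumes "q \<noteq> 0"
  shows "max (degree (L1*(p-q))) (degree (p + T0*q)) = max (degree p) (degree q) + 1"
proof -
  have L: "L1 \<noteq> (0::'a poly)" "degree (L1::'a poly) = 1" by (simp_all add: L1_def)
  have T: "T0 \<noteq> (0::'a poly)" "degree (T0::'a poly) = 1" by (simp_all add: T0_def)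
  have dT: "degree (T0*q) = degree q + 1" using T assms by (simp add: degree_mult_eq)
  show ?thesis
  proof (cases "degree p \<le> degree q")
    case True
    hence "degree p < degree (T0*q)" using dT by simp
    hence dQ: "degree (p + T0*q) = degree q + 1" using dT by (simp add: degree_add_eq_right)
    have "degree (L1*(p-q)) \<le> degree (L1::'a poly) + degree (p - q)" by (rule degree_mult_le)
    also have "\<dots> \<le> 1 + max (degree p) (degree q)" using degree_diff_le_max L by simp
    finally show ?thesis using dQ True by simp
  next
    case False
    have "degree (p - q) = degree p" using False
      by (metis degree_add_eq_left degree_minus diff_conv_add_uminus not_le)
    moreover have "p - q \<noteq> 0" using False by auto
    ultimately have dP: "degree (L1*(p-q)) = degree p + 1" using L by (simp add: degree_mult_eq)
    have "degree (p + T0*q) \<le> max (degree p) (degree (T0*q))" by (rule degree_add_le_max)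
    hence "degree (p + T0*q) \<le> degree p" using dT False by simp
    thus ?thesis using dP False by simp
  qed
qed

theorem lemma5p14:
  fixes \<alpha> :: "'a::{alg_closed_field,field_char_0,field_gcd} ratfun"
  assumes "cond_star \<alpha>"
  shows "cond_star (phi2 \<alpha>) \<and> height (phi2 \<alpha>) = height \<alpha> + 1"
proof -
  obtain p q where pq: "quot_of_fract \<alpha> = (p, q)" by (cases "quot_of_fract \<alpha>") auto
  have q0: "q \<noteq> 0" using snd_quot_of_fract_nonzero[of \<alpha>] pq by simp
  have cp: "coprime p q" using coprime_quot_of_fract[of \<alpha>] pq by simp
  have al: "\<alpha> = to_fract p / to_fract q"
    using Fract_quot_of_fract[of \<alpha>] pq by (simp add: Fract_conv_to_fract)
  have cs: "poly p (-1) = 0 \<and> poly (Nf p q) (-1) = 0 \<and> (\<forall>c. poly (Nf p q) c = 0 \<longrightarrow> c = -1 \<or> c = -3/4)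
    \<and> (poly (Nf p q) (-3/4) = 0 \<longrightarrow> poly (p - [:1/2:]*q) (-3/4) = 0)"
    using assms unfolding al cond_star_char[OF q0 cp] .
  have p1: "poly p (-1) = 0" using cs by blast
  have q1: "poly q (-1) \<noteq> 0"
  proof
    assume "poly q (-1) = 0"
    hence "[:1,1:] dvd q" "[:1,1:] dvd p" using p1 poly_eq_0_iff_dvd[of _ "-1"] by auto
    hence "is_unit ([:1,1:] :: 'a poly)" using cp coprime_common_divisor by blast
    thus False by (simp add: is_unit_poly_iff)
  qed
  define P where "P = L1 * (p - q)"
  define Q where "Q = p + T0 * q"
  have pT: "poly T0 (-1) = -1" by (simp add: T0_def)
  have pL: "poly L1 (-1) = 0" by (simp add: L1_def)
  have Q1: "poly Q (-1) = - poly q (-1)" by (simp add: Q_def pT p1)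
  hence Q0: "Q \<noteq> 0" using q1 by auto
  have cLQ: "coprime L1 Q" using Q1 q1 by (intro lin_coprime) simp
  have cpq: "coprime (p - q) q" using coprime_add_mul_left[of p "-1" q] cp by simp
  have "coprime L1 (p - q)" using q1 p1 by (intro lin_coprime) simp
  hence "coprime (p - q) L1" by (simp add: coprime_commute)
  hence "coprime (p - q) (L1 * q)" using cpq by simp
  moreover have "Q = L1 * q + 1 * (p - q)" by (simp add: Q_def L1_T0 algebra_simps)
  ultimately have "coprime (p - q) Q" using coprime_add_mul_right[of "p - q" "L1 * q" 1] by simp
  hence cPQ: "coprime P Q" using cLQ by (simp add: P_def)
  have be: "phi2 \<alpha> = to_fract P / to_fract Q"
  proof -
    define x where "x = to_fract p"
    define y where "y = to_fract q"
    define T where "T = (to_fract T0 :: 'a ratfun)"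
    define L where "L = (to_fract L1 :: 'a ratfun)"
    have y0: "y \<noteq> 0" using q0 by (simp add: y_def)
    have tQ: "to_fract Q = x + T * y" by (simp add: Q_def x_def y_def T_def)
    have tP: "to_fract P = L * (x - y)" by (simp add: P_def x_def y_def L_def)
    have Q0': "x + T * y \<noteq> 0" using Q0 tQ by (metis to_fract_eq_0_iff)
    have tv: "tvar = T" by (simp add: tvar_def T0_def T_def)
    have "phi2 \<alpha> = L * (x / y - 1) / (x / y + T)"
    proof -
      have TL: "T + 1 = L" using tvar1 tv by (simp add: L_def)
      show ?thesis unfolding phi2_def al x_def[symmetric] y_def[symmetric] tv TL ..
    qed
    also have "x / y - 1 = (x - y) / y" using y0 by (simp add: field_simps)
    also have "x / y + T = (x + T * y) / y" using y0 by (simp add: field_simps)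
    also have "L * ((x - y) / y) / ((x + T * y) / y) = L * (x - y) / (x + T * y)"
      using y0 by (simp add: divide_divide_eq_right)
    finally show ?thesis using tQ tP by simp
  qed
  have NN: "Nf P Q = L1^2 * Nf p q"
    by (simp add: Nf_def P_def Q_def L1_T0 algebra_simps power2_eq_square)
  have A: "cond_star (phi2 \<alpha>)"
    unfolding be cond_star_char[OF Q0 cPQ] NN
  proof (intro conjI allI impI)
    show "poly P (-1) = 0" by (simp add: P_def pL)
    show "poly (L1\<^sup>2 * Nf p q) (- 1) = 0" by (simp add: pL)
    fix c assume "poly (L1\<^sup>2 * Nf p q) c = 0"
    hence "poly L1 c = 0 \<or> poly (Nf p q) c = 0" by simp
    moreover have "poly L1 c = 0 \<Longrightarrow> c = -1" by (simp add: L1_def eq_neg_iff_add_eq_0 add.commute)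
    ultimately show "c = -1 \<or> c = -3/4" using cs by blast
  next
    assume "poly (L1\<^sup>2 * Nf p q) (-3/4) = 0"
    moreover have "poly L1 (-3/4::'a) \<noteq> 0" by (simp add: L1_def)
    ultimately have "poly (Nf p q) (-3/4) = 0" by simp
    hence h: "poly (p - [:1/2:]*q) (-3/4) = 0" using cs by blast
    show "poly (P - [:1/2:]*Q) (-3/4) = 0"
      using h by (simp add: P_def Q_def L1_def T0_def field_simps)
  qed
  have "height (phi2 \<alpha>) = max (degree P) (degree Q)"
    unfolding height_def be repr_deg[OF Q0 cPQ] ..
  also have "\<dots> = max (degree p) (degree q) + 1" unfolding P_def Q_def by (rule height_step[OF q0])
  also have "\<dots> = height \<alpha> + 1" by (simp add: height_def pq)
  finally show ?thesis using A by simp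
qed

end
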